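(* Let $r\in\mathbb N$ and let $(g_n)_{n\in\mathbb N}$ be a sequence in $\mathcal L_r$ whose supports are all contained in a common well-ordered set $W\subseteq\mathbb R_{\ge0}\times\mathbb Z^r$ with $\min W>\mathbf 0_{r+1}$, and let $g_0\in\mathcal L_r$. Let $\varphi\in\mathcal L_r^0$. Then $g_n\to g_0$ as $n\to\infty$ in the weak topology of $\mathcal L_r$ if and only if $g_n\circ\varphi\to g_0\circ\varphi$ as $n\to\infty$ in the weak topology of $\mathcal L_r$.
   Context: $z$ infinitesimal; $\boldsymbol\ell_1:=-1/\ln z$, $\boldsymbol\ell_{j+1}:=\boldsymbol\ell_j\circ\boldsymbol\ell_1$. $\mathcal L_r$: formal sums $\sum a_{\alpha,n_1,\dots,n_r}z^\alpha\boldsymbol\ell_1^{n_1}\cdots\boldsymbol\ell_r^{n_r}$, real coefficients, well-ordered support in $\mathbb R_{\ge0}\times\mathbb Z^r$ (lexicographic order). $\mathcal L_r^0$: elements with leading term $z$ (a group under composition of transseries). Weak topology: $(\varphi_n)\to\varphi$ iff for each $(\alpha,n_1,\dots,n_r)$ the coefficient of $z^\alpha\boldsymbol\ell_1^{n_1}\cdots\boldsymbol\ell_r^{n_r}$ in $\varphi_n$ converges in $\mathbb R$ to the corresponding coefficient of $\varphi$. *)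

theory Defs
  imports Complex_Main "HOL-Library.Product_Lexorder" "HOL-Library.List_Lexorder"
begin

text \<open>Exponents (alpha, [n_1,...,n_r]) of monomials z^alpha l_1^n_1 ... l_r^n_r,
  ordered lexicographically (Product_Lexorder / List_Lexorder).  Intermediate objects (derivatives) may
  have negative real exponents, so the carrier type is all of R x Z^r.\<close>

type_synonym expo = "real \<times> int list"
type_synonym tser = "expo \<Rightarrow> real"

definition supp :: "tser \<Rightarrow> expo set" where
  "supp f = {e. f e \<noteq> 0}"

definition well_ordered :: "'a::linorder set \<Rightarrow> bool" where
  "well_ordered S \<longleftrightarrow> (\<forall>A\<subseteq>S. A \<noteq> {} \<longrightarrow> (\<exists>m\<in>A. \<forall>x\<in>A. m \<le> x))"

definition expos :: "nat \<Rightarrow> expo set" where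
  "expos r = {(a, ns). 0 \<le> a \<and> length ns = r}"

definition Lr :: "nat \<Rightarrow> tser set" where
  "Lr r = {f. well_ordered (supp f) \<and> supp f \<subseteq> expos r}"

definition expo_add :: "expo \<Rightarrow> expo \<Rightarrow> expo" where
  "expo_add e1 e2 = (fst e1 + fst e2, map2 (+) (snd e1) (snd e2))"

text \<open>Cauchy product of formal sums (finite sums for well-ordered supports).\<close>
definition tmult :: "tser \<Rightarrow> tser \<Rightarrow> tser" where
  "tmult f g = (\<lambda>e. \<Sum>(e1, e2) \<in> {(e1, e2). e1 \<in> supp f \<and> e2 \<in> supp g \<and> expo_add e1 e2 = e}.
                     f e1 * g e2)"

definition tmonom :: "nat \<Rightarrow> real \<Rightarrow> tser" where
  "tmonom r a = (\<lambda>e. if e = (a, replicate r 0) then 1 else 0)"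

definition tpow :: "nat \<Rightarrow> tser \<Rightarrow> nat \<Rightarrow> tser" where
  "tpow r f k = (tmult f ^^ k) (tmonom r 0)"

text \<open>Formal derivative d/dz, term by term, using
  d/dz (z^a l^n) = z^(a-1) l^n (a + sum_j n_j l_1 ... l_j),
  which follows from l_1' = l_1^2/z and l_(j+1) = -1/ln l_j.
  Position j (0-based) of the list corresponds to l_(j+1);
  ones_upto j len is the exponent vector of l_1 ... l_(j+1).\<close>
definition ones_upto :: "nat \<Rightarrow> nat \<Rightarrow> int list" where
  "ones_upto j len = map (\<lambda>i. if i \<le> j then 1 else 0) [0..<len]"

definition tderiv :: "tser \<Rightarrow> tser" where
  "tderiv g = (\<lambda>(b, m). (b + 1) * g (b + 1, m)
      + (\<Sum>j<length m. (of_int (m ! j) - 1) * g (b + 1, map2 (-) m (ones_upto j (length m)))))"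

text \<open>Composition g o phi for phi = z + eps with eps of order < z, via the
  (formal) Taylor expansion g(z + eps) = sum_k g^(k)(z) eps^k / k!; for each
  exponent only finitely many k contribute.\<close>
definition tcomp :: "nat \<Rightarrow> tser \<Rightarrow> tser \<Rightarrow> tser" where
  "tcomp r g \<phi> =
     (let \<epsilon> = (\<lambda>e. \<phi> e - tmonom r 1 e)
      in (\<lambda>e. (\<Sum>k. tmult ((tderiv ^^ k) g) (tpow r \<epsilon> k) e / fact k)))"

definition Lr0 :: "nat \<Rightarrow> tser set" where
  "Lr0 r = {\<phi> \<in> Lr r. \<phi> (1, replicate r 0) = 1 \<and> (\<forall>e\<in>supp \<phi>. (1, replicate r 0) \<le> e)}"

definition weak_conv :: "(nat \<Rightarrow> tser) \<Rightarrow> tser \<Rightarrow> bool" where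
  "weak_conv g g0 \<longleftrightarrow> (\<forall>e. (\<lambda>n. g n e) \<longlonglongrightarrow> g0 e)"

end

theory Submission
  imports Defs "HOL-Library.Multiset"
begin

lemma wo_subset: "well_ordered B \<Longrightarrow> A \<subseteq> B \<Longrightarrow> well_ordered A"
  unfolding well_ordered_def by blast

lemma wo_finite:
  fixes A :: "'a::linorder set"
  shows "finite A \<Longrightarrow> well_ordered A"
  unfolding well_ordered_def
proof (intro allI impI)
  fix B assume "finite A" "B \<subseteq> A" "B \<noteq> {}"
  then have "finite B" using finite_subset by blast
  then show "\<exists>m\<in>B. \<forall>x\<in>B. m \<le> x" using \<open>B \<noteq> {}\<close>
    by (intro bexI[of _ "Min B"]) auto
qed

lemma wo_union:
  fixes A :: "'a::linorder set"
  assumes "well_ordered A" "well_ordered B"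
  shows "well_ordered (A \<union> B)"
  unfolding well_ordered_def
proof (intro allI impI)
  fix C assume C: "C \<subseteq> A \<union> B" "C \<noteq> {}"
  show "\<exists>m\<in>C. \<forall>x\<in>C. m \<le> x"
  proof (cases "C \<inter> A = {}")
    case True
    then have "C \<subseteq> B" using C by auto
    then show ?thesis using assms(2) C unfolding well_ordered_def by blast
  next
    case False
    obtain a where a: "a \<in> C \<inter> A" "\<forall>x\<in>C \<inter> A. a \<le> x"
      using assms(1) False unfolding well_ordered_def by (meson inf_le2)
    show ?thesis
    proof (cases "C \<inter> B = {}")
      case True
      then have "C \<subseteq> A" using C by auto
      then show ?thesis using a by (intro bexI[of _ a]) auto
    next
      case False
      obtain b where b: "b \<in> C \<inter> B" "\<forall>x\<in>C \<inter> B. b \<le> x"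
        using assms(2) False unfolding well_ordered_def by (meson inf_le2)
      show ?thesis
      proof (intro bexI[of _ "min a b"] ballI)
        fix x assume "x \<in> C"
        then have "x \<in> A \<or> x \<in> B" using C by auto
        then show "min a b \<le> x" using a b \<open>x \<in> C\<close> by (auto simp: min_le_iff_disj)
      next
        show "min a b \<in> C" using a b by (auto simp: min_def)
      qed
    qed
  qed
qed

lemma wo_Union_finite:
  fixes F :: "'a::linorder set set"
  shows "finite F \<Longrightarrow> (\<forall>A\<in>F. well_ordered A) \<Longrightarrow> well_ordered (\<Union>F)"
proof (induction F rule: finite_induct)
  case empty
  then show ?case by (simp add: wo_finite)
next
  case (insert x F)
  then show ?case by (simp add: wo_union)
qed

lemma wo_image_mono:
  assumes "well_ordered A" "\<And>x y. x \<in> A \<Longrightarrow> y \<in> A \<Longrightarrow> x \<le> y \<Longrightarrow> f x \<le> f y"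
  shows "well_ordered (f ` A)"
  unfolding well_ordered_def
proof (intro allI impI)
  fix B assume B: "B \<subseteq> f ` A" "B \<noteq> {}"
  let ?C = "{x\<in>A. f x \<in> B}"
  have "?C \<noteq> {}" using B by auto
  moreover have "?C \<subseteq> A" by auto
  ultimately obtain m where m: "m \<in> ?C" "\<forall>x\<in>?C. m \<le> x"
    using assms(1) unfolding well_ordered_def by blast
  show "\<exists>m\<in>B. \<forall>x\<in>B. m \<le> x"
  proof (intro bexI[of _ "f m"] ballI)
    fix y assume "y \<in> B"
    then obtain x where "x \<in> A" "y = f x" using B by auto
    then show "f m \<le> y" using m assms(2) \<open>y \<in> B\<close> by auto
  qed (use m in auto)
qed

lemma wo_nodecr:
  fixes S :: "'a::linorder set" and f :: "nat \<Rightarrow> 'a"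
  assumes "well_ordered S" "\<forall>n. f n \<in> S"
  shows "\<not> (\<forall>n. f (Suc n) < f n)"
proof
  assume dec: "\<forall>n. f (Suc n) < f n"
  have "range f \<subseteq> S" "range f \<noteq> {}" using assms(2) by auto
  then obtain m where "m \<in> range f" "\<forall>x\<in>range f. m \<le> x"
    using assms(1) unfolding well_ordered_def by blast
  then obtain k where "\<forall>x\<in>range f. f k \<le> x" by auto
  then have "f k \<le> f (Suc k)" by auto
  with dec show False by (meson leD)
qed

lemma wo_from_nodecr:
  fixes S :: "'a::linorder set"
  assumes "\<And>f. \<forall>n. f n \<in> S \<Longrightarrow> \<not> (\<forall>n. f (Suc n) < f n)"
  shows "well_ordered S"
  unfolding well_ordered_def
proof (rule ccontr)
  assume "\<not> (\<forall>A\<subseteq>S. A \<noteq> {} \<longrightarrow> (\<exists>m\<in>A. \<forall>x\<in>A. m \<le> x))"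
  then obtain A where A: "A \<subseteq> S" "A \<noteq> {}" "\<forall>m\<in>A. \<exists>x\<in>A. x < m"
    by (auto simp: not_le)
  then obtain x0 where "x0 \<in> A" by auto
  have "\<exists>f. f 0 = x0 \<and> (\<forall>n. f n \<in> A \<longrightarrow> f (Suc n) \<in> A \<and> f (Suc n) < f n)"
  proof -
    define f where "f = rec_nat x0 (\<lambda>_ y. SOME z. z \<in> A \<and> z < y)"
    have "f 0 = x0" by (simp add: f_def)
    moreover have "\<forall>n. f n \<in> A \<longrightarrow> f (Suc n) \<in> A \<and> f (Suc n) < f n"
    proof (intro allI impI)
      fix n assume "f n \<in> A"
      then have "\<exists>z. z \<in> A \<and> z < f n" using A(3) by auto
      then have "(SOME z. z \<in> A \<and> z < f n) \<in> A \<and> (SOME z. z \<in> A \<and> z < f n) < f n"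
        by (rule someI_ex)
      then show "f (Suc n) \<in> A \<and> f (Suc n) < f n" by (simp add: f_def)
    qed
    ultimately show ?thesis by blast
  qed
  then obtain f where f: "f 0 = x0" "\<forall>n. f n \<in> A \<longrightarrow> f (Suc n) \<in> A \<and> f (Suc n) < f n"
    by blast
  have fA: "\<forall>n. f n \<in> A"
  proof
    fix n show "f n \<in> A" by (induction n) (use f \<open>x0 \<in> A\<close> in auto)
  qed
  then have "\<forall>n. f n \<in> S" using A by auto
  moreover have "\<forall>n. f (Suc n) < f n" using f fA by auto
  ultimately show False using assms by blast
qed

lemma wo_nondecr_subseq:
  fixes S :: "'a::linorder set" and f :: "nat \<Rightarrow> 'a"
  assumes "well_ordered S" "\<forall>n. f n \<in> S"
  shows "\<exists>h. strict_mono h \<and> (\<forall>n. f (h n) \<le> f (h (Suc n)))"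
proof -
  obtain h where h: "strict_mono h" "monoseq (\<lambda>n. f (h n))" using seq_monosub[of f] by blast
  show ?thesis
  proof (cases "\<forall>m. \<forall>n\<ge>m. f (h m) \<le> f (h n)")
    case True
    have "\<forall>n. f (h n) \<le> f (h (Suc n))"
    proof
      fix n show "f (h n) \<le> f (h (Suc n))" using True[rule_format, of n "Suc n"] by simp
    qed
    then show ?thesis using h(1) by blast
  next
    case False
    then have dec: "\<forall>m. \<forall>n\<ge>m. f (h n) \<le> f (h m)" using h(2) unfolding monoseq_def by blast
    have "range (\<lambda>n. f (h n)) \<subseteq> S" using assms(2) by blast
    moreover have "range (\<lambda>n. f (h n)) \<noteq> {}" by blast
    ultimately obtain mv where mv: "mv \<in> range (\<lambda>n. f (h n))" "\<forall>x\<in>range (\<lambda>n. f (h n)). mv \<le> x"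
      using assms(1) unfolding well_ordered_def by blast
    from mv(1) obtain k where kk: "mv = f (h k)" by blast
    have k: "\<forall>n. f (h k) \<le> f (h n)" using mv(2) kk by blast
    have const: "\<forall>n\<ge>k. f (h n) = f (h k)"
    proof (intro allI impI)
      fix n assume "k \<le> n"
      then have "f (h n) \<le> f (h k)" using dec by blast
      moreover have "f (h k) \<le> f (h n)" using k by blast
      ultimately show "f (h n) = f (h k)" by (rule order_antisym)
    qed
    define h' where "h' n = h (n + k)" for n
    have "strict_mono h'" using h(1) by (simp add: strict_mono_def h'_def)
    moreover have "\<forall>n. f (h' n) \<le> f (h' (Suc n))"
    proof
      fix n
      have "f (h (n + k)) = f (h k)" "f (h (Suc n + k)) = f (h k)"
        using const[rule_format, of "n + k"] const[rule_format, of "Suc n + k"] by auto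
      then show "f (h' n) \<le> f (h' (Suc n))" unfolding h'_def by simp
    qed
    ultimately show ?thesis by blast
  qed
qed

lemma strict_decr_lt:
  fixes f :: "nat \<Rightarrow> 'a::linorder"
  assumes "\<forall>n. f (Suc n) < f n" "m < n"
  shows "f n < f m"
  using assms(2)
proof (induction n)
  case 0 then show ?case by simp
next
  case (Suc n)
  have fs: "f (Suc n) < f n" using assms(1) by simp
  show ?case
  proof (cases "m = n")
    case True then show ?thesis using fs by simp
  next
    case False
    then have "m < n" using Suc.prems by simp
    then have "f n < f m" by (rule Suc.IH)
    with fs show ?thesis by (rule less_trans)
  qed
qed

lemma wo_two_subseq:
  fixes a :: "nat \<Rightarrow> 'a::linorder" and b :: "nat \<Rightarrow> 'b::linorder"
  assumes "well_ordered A" "well_ordered B" "\<forall>n. a n \<in> A" "\<forall>n. b n \<in> B"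
  shows "\<exists>i j. i < j \<and> a i \<le> a j \<and> b i \<le> b j"
proof -
  obtain h1 where h1: "strict_mono h1" "\<forall>n. a (h1 n) \<le> a (h1 (Suc n))"
    using wo_nondecr_subseq[OF assms(1,3)] by blast
  have "\<forall>n. b (h1 n) \<in> B" using assms(4) by blast
  then obtain h2 where h2: "strict_mono h2" "\<forall>n. b (h1 (h2 n)) \<le> b (h1 (h2 (Suc n)))"
    using wo_nondecr_subseq[OF assms(2), of "\<lambda>n. b (h1 n)"] by blast
  have "h2 0 < h2 1" using h2(1) by (simp add: strict_monoD)
  then have lt: "h1 (h2 0) < h1 (h2 1)" using h1(1) by (simp add: strict_monoD)
  have "a (h1 (h2 0)) \<le> a (h1 (h2 1))"
    using lift_Suc_mono_le[of "\<lambda>n. a (h1 n)", OF _ less_imp_le[OF \<open>h2 0 < h2 1\<close>]] h1(2) by blast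
  moreover have "b (h1 (h2 0)) \<le> b (h1 (h2 1))" using h2(2) by (metis One_nat_def)
  ultimately show ?thesis using lt by blast
qed

locale oag =
  fixes V :: "'a::linorder set" and pl :: "'a \<Rightarrow> 'a \<Rightarrow> 'a"
  assumes cl: "x \<in> V \<Longrightarrow> y \<in> V \<Longrightarrow> pl x y \<in> V"
    and comm: "x \<in> V \<Longrightarrow> y \<in> V \<Longrightarrow> pl x y = pl y x"
    and smono: "x \<in> V \<Longrightarrow> y \<in> V \<Longrightarrow> z \<in> V \<Longrightarrow> x < y \<Longrightarrow> pl x z < pl y z"
begin

lemma mono: "x \<in> V \<Longrightarrow> y \<in> V \<Longrightarrow> z \<in> V \<Longrightarrow> x \<le> y \<Longrightarrow> pl x z \<le> pl y z"
proof (cases "x = y")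
  case False
  assume "x \<in> V" "y \<in> V" "z \<in> V" "x \<le> y"
  then have "x < y" using False by simp
  then show ?thesis using smono \<open>x \<in> V\<close> \<open>y \<in> V\<close> \<open>z \<in> V\<close> less_imp_le by blast
qed simp

lemma mono2:
  assumes "x \<in> V" "x' \<in> V" "y \<in> V" "y' \<in> V" "x \<le> x'" "y \<le> y'"
  shows "pl x y \<le> pl x' y'"
proof -
  have "pl x y \<le> pl x' y" using mono assms by blast
  also have "\<dots> = pl y x'" using comm assms by blast
  also have "\<dots> \<le> pl y' x'" using mono assms by blast
  also have "\<dots> = pl x' y'" using comm assms by blast
  finally show ?thesis .
qed

lemma smono2:
  assumes "x \<in> V" "x' \<in> V" "y \<in> V" "y' \<in> V" "x < x'" "y \<le> y'"
  shows "pl x y < pl x' y'"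
proof -
  have "pl x y < pl x' y" using smono assms by blast
  also have "\<dots> \<le> pl x' y'" using mono2 assms by auto
  finally show ?thesis .
qed

lemma eq_case:
  assumes "x \<in> V" "x' \<in> V" "y \<in> V" "y' \<in> V" "x \<le> x'" "y \<le> y'" "pl x y = pl x' y'"
  shows "x = x' \<and> y = y'"
proof (rule ccontr)
  assume "\<not> (x = x' \<and> y = y')"
  then have "x < x' \<or> y < y'" using assms by auto
  then have "pl x y < pl x' y'"
  proof
    assume "x < x'" then show ?thesis using smono2 assms by blast
  next
    assume "y < y'"
    then have "pl y x < pl y' x'" using smono2 assms by blast
    moreover have "pl y x = pl x y" "pl y' x' = pl x' y'" using comm assms by auto
    ultimately show ?thesis by simp
  qed
  then show False using assms by simp
qed

definition sumset :: "'a set \<Rightarrow> 'a set \<Rightarrow> 'a set" where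
  "sumset A B = {pl a b | a b. a \<in> A \<and> b \<in> B}"

lemma sumset_V: "A \<subseteq> V \<Longrightarrow> B \<subseteq> V \<Longrightarrow> sumset A B \<subseteq> V"
  unfolding sumset_def using cl by blast

lemma wo_sumset:
  assumes "A \<subseteq> V" "B \<subseteq> V" "well_ordered A" "well_ordered B"
  shows "well_ordered (sumset A B)"
proof (rule wo_from_nodecr)
  fix f :: "nat \<Rightarrow> 'a" assume f: "\<forall>n. f n \<in> sumset A B"
  show "\<not> (\<forall>n. f (Suc n) < f n)"
  proof
    assume dec: "\<forall>n. f (Suc n) < f n"
    have "\<forall>n. \<exists>x. x \<in> A \<and> (\<exists>y. y \<in> B \<and> f n = pl x y)"
      using f unfolding sumset_def by blast
    then obtain a where a: "\<forall>n. a n \<in> A \<and> (\<exists>y. y \<in> B \<and> f n = pl (a n) y)"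
      by (rule choice[THEN exE]) blast
    then have "\<forall>n. \<exists>y. y \<in> B \<and> f n = pl (a n) y" by blast
    then obtain b where b: "\<forall>n. b n \<in> B \<and> f n = pl (a n) (b n)"
      by (rule choice[THEN exE]) blast
    obtain i j where ij: "i < j" "a i \<le> a j" "b i \<le> b j"
      using wo_two_subseq[OF assms(3,4), of a b] a b by blast
    have "a i \<in> V" "a j \<in> V" "b i \<in> V" "b j \<in> V" using a b assms(1,2) by blast+
    then have "pl (a i) (b i) \<le> pl (a j) (b j)" using mono2 ij(2,3) by blast
    then have "f i \<le> f j" using b by simp
    moreover have "f j < f i" using strict_decr_lt[OF dec ij(1)] .
    ultimately show False by simp
  qed
qed

lemma fin_pairs:
  assumes "A \<subseteq> V" "B \<subseteq> V" "well_ordered A" "well_ordered B"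
  shows "finite {(a, b). a \<in> A \<and> b \<in> B \<and> pl a b = c}"
proof (rule ccontr)
  let ?S = "{(a, b). a \<in> A \<and> b \<in> B \<and> pl a b = c}"
  assume "infinite ?S"
  from infinite_countable_subset[OF this] obtain ab :: "nat \<Rightarrow> 'a \<times> 'a"
    where ab: "inj ab" "range ab \<subseteq> ?S" by (elim exE conjE)
  have abS: "\<forall>n. fst (ab n) \<in> A \<and> snd (ab n) \<in> B \<and> pl (fst (ab n)) (snd (ab n)) = c"
  proof
    fix n have "ab n \<in> ?S" using ab(2) by (rule subsetD) simp
    then show "fst (ab n) \<in> A \<and> snd (ab n) \<in> B \<and> pl (fst (ab n)) (snd (ab n)) = c"
      by (cases "ab n") simp
  qed
  obtain i j where ij: "i < j" "fst (ab i) \<le> fst (ab j)" "snd (ab i) \<le> snd (ab j)"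
    using wo_two_subseq[OF assms(3,4), of "\<lambda>n. fst (ab n)" "\<lambda>n. snd (ab n)"] abS by blast
  have V: "fst (ab i) \<in> V" "fst (ab j) \<in> V" "snd (ab i) \<in> V" "snd (ab j) \<in> V"
    using abS assms(1,2) by (meson subsetD)+
  have "pl (fst (ab i)) (snd (ab i)) = pl (fst (ab j)) (snd (ab j))" using abS by simp
  then have "fst (ab i) = fst (ab j) \<and> snd (ab i) = snd (ab j)"
    using eq_case[OF V ij(2,3)] by blast
  then have "ab i = ab j" by (simp add: prod_eq_iff)
  with ab(1) ij(1) show False by (simp add: inj_eq)
qed

end


definition vadd :: "real list \<Rightarrow> real list \<Rightarrow> real list" where
  "vadd x y = map2 (+) x y"

lemma vadd_Cons[simp]: "vadd (a # x) (b # y) = (a + b) # vadd x y"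
  by (simp add: vadd_def)

lemma vadd_Nil[simp]: "vadd [] y = []" "vadd x [] = []"
  by (simp_all add: vadd_def)

lemma length_vadd[simp]: "length (vadd x y) = min (length x) (length y)"
  by (simp add: vadd_def)

lemma vadd_comm: "vadd x y = vadd y x"
proof (induction x arbitrary: y)
  case Nil then show ?case by simp
next
  case (Cons a x) then show ?case by (cases y) (simp_all add: add.commute)
qed

lemma vadd_less:
  "length x = length y \<Longrightarrow> length y = length z \<Longrightarrow> x < y \<Longrightarrow> vadd x z < vadd y z"
proof (induction x arbitrary: y z)
  case Nil then show ?case by simp
next
  case (Cons a x)
  then obtain b y' where y: "y = b # y'" by (cases y) auto
  from Cons obtain c z' where z: "z = c # z'" by (cases z) auto
  show ?case using Cons y z by auto
qed

interpretation vec: oag "{x. length x = n}" vadd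
  by unfold_locales (auto simp: vadd_comm vadd_less)

interpretation rl: oag "UNIV :: real set" "(+)"
  by unfold_locales auto

lemma sumset_Suc_rl:
  "{sum_list ys | ys. length ys = Suc l \<and> set ys \<subseteq> A} =
   rl.sumset A {sum_list ys | ys. length ys = l \<and> set ys \<subseteq> A}"
  unfolding rl.sumset_def
proof (intro equalityI subsetI)
  fix s assume "s \<in> {sum_list ys | ys. length ys = Suc l \<and> set ys \<subseteq> A}"
  then obtain ys where ys: "s = sum_list ys" "length ys = Suc l" "set ys \<subseteq> A" by blast
  then obtain a ys' where "ys = a # ys'" by (cases ys) auto
  then show "s \<in> {a + b |a b. a \<in> A \<and> b \<in> {sum_list ys |ys. length ys = l \<and> set ys \<subseteq> A}}"
    using ys by auto
next
  fix s assume "s \<in> {a + b |a b. a \<in> A \<and> b \<in> {sum_list ys |ys. length ys = l \<and> set ys \<subseteq> A}}"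
  then obtain a ys where "s = a + sum_list ys" "a \<in> A" "length ys = l" "set ys \<subseteq> A" by blast
  then show "s \<in> {sum_list ys | ys. length ys = Suc l \<and> set ys \<subseteq> A}"
    by (intro CollectI exI[of _ "a # ys"]) auto
qed

lemma wo_lsum:
  fixes A :: "real set"
  assumes "well_ordered A"
  shows "well_ordered {sum_list ys | ys. length ys = l \<and> set ys \<subseteq> A}"
proof (induction l)
  case 0
  have "{sum_list ys | ys. length ys = 0 \<and> set ys \<subseteq> A} = {0}" by auto
  then show ?case by (simp add: wo_finite)
next
  case (Suc l)
  then show ?case unfolding sumset_Suc_rl using rl.wo_sumset[OF _ _ assms] by blast
qed

lemma fin_sols:
  fixes A :: "real set"
  assumes "well_ordered A"
  shows "finite {ys. length ys = l \<and> set ys \<subseteq> A \<and> sum_list ys = c}"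
proof (induction l arbitrary: c)
  case 0
  have "{ys. length ys = 0 \<and> set ys \<subseteq> A \<and> sum_list ys = c} \<subseteq> {[]}" by auto
  then show ?case using finite_subset by blast
next
  case (Suc l)
  let ?T = "{sum_list ys | ys. length ys = l \<and> set ys \<subseteq> A}"
  let ?Pr = "{(a, t). a \<in> A \<and> t \<in> ?T \<and> a + t = c}"
  have fP: "finite ?Pr" using rl.fin_pairs[OF _ _ assms wo_lsum[OF assms]] by blast
  have "{ys. length ys = Suc l \<and> set ys \<subseteq> A \<and> sum_list ys = c} \<subseteq>
        (\<Union>pr\<in>?Pr. (\<lambda>ys. fst pr # ys) ` {ys. length ys = l \<and> set ys \<subseteq> A \<and> sum_list ys = snd pr})"
  proof
    fix ys assume "ys \<in> {ys. length ys = Suc l \<and> set ys \<subseteq> A \<and> sum_list ys = c}"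
    then obtain a ys' where ys: "ys = a # ys'" "length ys' = l" "a \<in> A" "set ys' \<subseteq> A" "a + sum_list ys' = c"
      by (cases ys) auto
    then have "(a, sum_list ys') \<in> ?Pr" by blast
    then show "ys \<in> (\<Union>pr\<in>?Pr. (\<lambda>ys. fst pr # ys) ` {ys. length ys = l \<and> set ys \<subseteq> A \<and> sum_list ys = snd pr})"
      using ys by force
  qed
  moreover have "finite (\<Union>pr\<in>?Pr. (\<lambda>ys. fst pr # ys) ` {ys. length ys = l \<and> set ys \<subseteq> A \<and> sum_list ys = snd pr})"
    using fP Suc.IH by blast
  ultimately show ?case using finite_subset by blast
qed

definition vsum :: "nat \<Rightarrow> real list list \<Rightarrow> real list" where
  "vsum n xs = map (\<lambda>i. sum_list (map (\<lambda>x. x ! i) xs)) [0..<n]"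

lemma length_vsum[simp]: "length (vsum n xs) = n"
  by (simp add: vsum_def)

lemma vsum_Suc:
  assumes "\<forall>x\<in>set xs. length x = Suc m"
  shows "vsum (Suc m) xs = sum_list (map hd xs) # vsum m (map tl xs)"
proof -
  have "[0..<Suc m] = 0 # map Suc [0..<m]" by (simp add: map_Suc_upt upt_conv_Cons)
  then have "vsum (Suc m) xs = sum_list (map (\<lambda>x. x ! 0) xs) # map (\<lambda>i. sum_list (map (\<lambda>x. x ! Suc i) xs)) [0..<m]"
    by (simp add: vsum_def)
  moreover have "map (\<lambda>x. x ! 0) xs = map hd xs"
  proof (intro map_cong refl)
    fix x assume "x \<in> set xs"
    then have "x \<noteq> []" using assms by auto
    then show "x ! 0 = hd x" by (simp add: hd_conv_nth)
  qed
  moreover have "map (\<lambda>i. sum_list (map (\<lambda>x. x ! Suc i) xs)) [0..<m] = vsum m (map tl xs)"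
    unfolding vsum_def
  proof (intro map_cong refl)
    fix i assume "i \<in> set [0..<m]"
    then have "i < m" by simp
    have "map (\<lambda>x. x ! Suc i) xs = map (\<lambda>x. x ! i) (map tl xs)"
      unfolding map_map
    proof (intro map_cong refl)
      fix x assume "x \<in> set xs"
      then have "length x = Suc m" using assms by auto
      then show "x ! Suc i = ((\<lambda>x. x ! i) \<circ> tl) x" using \<open>i < m\<close> by (simp add: nth_tl)
    qed
    then show "sum_list (map (\<lambda>x. x ! Suc i) xs) = sum_list (map (\<lambda>x. x ! i) (map tl xs))"
      by (rule arg_cong[where f=sum_list])
  qed
  ultimately show ?thesis by simp
qed

lemma sum_list_map_perm:
  "mset xs = mset ys \<Longrightarrow> sum_list (map f xs) = (sum_list (map f ys) :: 'a::comm_monoid_add)"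
proof -
  assume "mset xs = mset ys"
  then have "mset (map f xs) = mset (map f ys)" by simp
  then show ?thesis by (metis sum_mset_sum_list)
qed

lemma vsum_perm: "mset xs = mset ys \<Longrightarrow> vsum n xs = vsum n ys"
  unfolding vsum_def by (intro map_cong refl sum_list_map_perm)

lemma vsum_append: "vsum n (xs @ ys) = vadd (vsum n xs) (vsum n ys)"
  by (intro nth_equalityI) (auto simp: vsum_def vadd_def)


lemma hd_mono_list:
  fixes x y :: "real list"
  shows "x \<noteq> [] \<Longrightarrow> y \<noteq> [] \<Longrightarrow> x \<le> y \<Longrightarrow> hd x \<le> hd y"
  by (cases x; cases y) auto

lemma tl_mono_slice:
  fixes x y :: "real list"
  shows "x \<noteq> [] \<Longrightarrow> y \<noteq> [] \<Longrightarrow> hd x = hd y \<Longrightarrow> x \<le> y \<Longrightarrow> tl x \<le> tl y"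
  by (cases x; cases y) auto

lemma lexpos_hd:
  fixes p :: "real list"
  assumes "length p = Suc m" "replicate (Suc m) 0 < p"
  shows "0 \<le> hd p" "hd p = 0 \<Longrightarrow> replicate m 0 < tl p"
  using assms by (cases p; auto)+

lemma wo_slice:
  fixes X :: "real list set"
  assumes "well_ordered X" "\<forall>x\<in>X. x \<noteq> []"
  shows "well_ordered (tl ` {x\<in>X. hd x = h})"
proof (rule wo_image_mono)
  show "well_ordered {x\<in>X. hd x = h}" using assms(1) by (rule wo_subset) auto
next
  fix x y assume "x \<in> {x\<in>X. hd x = h}" "y \<in> {x\<in>X. hd x = h}" "x \<le> y"
  then show "tl x \<le> tl y" using assms(2) tl_mono_slice by auto
qed

lemma sum_list_lower:
  fixes ys :: "real list"
  shows "(\<forall>y\<in>set ys. L \<le> y) \<Longrightarrow> real (length ys) * L \<le> sum_list ys"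
proof (induction ys)
  case Nil then show ?case by simp
next
  case (Cons a ys) then show ?case by (simp add: algebra_simps)
qed

lemma wo_lower:
  fixes A :: "'a::linorder set"
  assumes "well_ordered A" "A \<noteq> {}"
  shows "\<exists>L\<in>A. \<forall>a\<in>A. L \<le> a"
  using assms unfolding well_ordered_def by blast

lemma NL:
  "\<forall>S P c q. well_ordered S \<longrightarrow> (\<forall>x\<in>S. length x = n) \<longrightarrow> well_ordered P \<longrightarrow>
     (\<forall>p\<in>P. length p = n \<and> replicate n 0 < p) \<longrightarrow>
     (\<exists>B. \<forall>xs ps. length xs = q \<longrightarrow> set xs \<subseteq> S \<longrightarrow> set ps \<subseteq> P \<longrightarrow>
           vsum n (xs @ ps) = c \<longrightarrow> length ps \<le> B)"
proof (induction n)
  case 0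
  show ?case
  proof (intro allI impI exI[of _ 0])
    fix S P c q xs ps
    assume P: "\<forall>p\<in>(P::real list set). length p = 0 \<and> replicate 0 0 < p" and ps: "set ps \<subseteq> P"
    have "P = {}" using P by auto
    then show "length ps \<le> 0" using ps by simp
  qed
next
  case (Suc m)
  show ?case
  proof (intro allI impI)
    fix S P :: "real list set" and c :: "real list" and q :: nat
    assume S: "well_ordered S" and Sl: "\<forall>x\<in>S. length x = Suc m"
      and P: "well_ordered P" and Pl: "\<forall>p\<in>P. length p = Suc m \<and> replicate (Suc m) 0 < p"
    have Sne: "\<forall>x\<in>S. x \<noteq> []" using Sl by auto
    have Pne: "\<forall>x\<in>P. x \<noteq> []" using Pl by auto
    define A0 where "A0 = hd ` S"
    define Q where "Q = hd ` {p\<in>P. 0 < hd p}"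
    have wA0: "well_ordered A0" unfolding A0_def
      using wo_image_mono[OF S, of hd] hd_mono_list Sne by blast
    have wQ: "well_ordered Q" unfolding Q_def
    proof (rule wo_image_mono)
      show "well_ordered {p \<in> P. 0 < hd p}" using P by (rule wo_subset) auto
    qed (use hd_mono_list Pne in auto)
    obtain L where L: "\<forall>a\<in>A0. L \<le> a"
    proof (cases "A0 = {}")
      case True then show ?thesis using that by auto
    next
      case False then show ?thesis using that wo_lower[OF wA0] by blast
    qed
    obtain \<alpha> where al: "\<alpha> > 0" "\<forall>x\<in>Q. \<alpha> \<le> x"
    proof (cases "Q = {}")
      case True then show ?thesis using that[of 1] by auto
    next
      case False
      then obtain a where a: "a \<in> Q" "\<forall>x\<in>Q. a \<le> x" using wo_lower[OF wQ] by blast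
      have "a > 0" using a(1) unfolding Q_def by auto
      then show ?thesis using that a by blast
    qed
    define K where "K = nat \<lceil>(hd c - real q * L) / \<alpha>\<rceil>"
    define Hs where "Hs = (\<Union>l\<in>{..q+K}. \<Union> (set ` {ys. length ys = l \<and> set ys \<subseteq> A0 \<union> Q \<and> sum_list ys = hd c}))"
    have fHs: "finite Hs" unfolding Hs_def
      using fin_sols[OF wo_union[OF wA0 wQ]] by auto
    define S' where "S' = tl ` {x \<in> S \<union> P. hd x \<in> Hs}"
    have S'eq: "S' = (\<Union>h\<in>Hs. tl ` {x \<in> S \<union> P. hd x = h})" unfolding S'_def by blast
    have wS': "well_ordered S'" unfolding S'eq
    proof (rule wo_Union_finite)
      show "finite ((\<lambda>h. tl ` {x \<in> S \<union> P. hd x = h}) ` Hs)" using fHs by simp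
    next
      show "\<forall>A\<in>(\<lambda>h. tl ` {x \<in> S \<union> P. hd x = h}) ` Hs. well_ordered A"
        using wo_slice[OF wo_union[OF S P]] Sne Pne by blast
    qed
    have S'l: "\<forall>x\<in>S'. length x = m" unfolding S'_def using Sl Pl by auto
    define P' where "P' = tl ` {p\<in>P. hd p = 0}"
    have wP': "well_ordered P'" unfolding P'_def using wo_slice[OF P Pne] .
    have P'l: "\<forall>p\<in>P'. length p = m \<and> replicate m 0 < p"
      unfolding P'_def using Pl lexpos_hd(2) by auto
    have IH: "\<forall>q'. \<exists>B. \<forall>xs ps. length xs = q' \<longrightarrow> set xs \<subseteq> S' \<longrightarrow> set ps \<subseteq> P' \<longrightarrow>
           vsum m (xs @ ps) = tl c \<longrightarrow> length ps \<le> B"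
      using Suc.IH wS' S'l wP' P'l by blast
    then obtain Bf where Bf: "\<forall>q' xs ps. length xs = q' \<longrightarrow> set xs \<subseteq> S' \<longrightarrow> set ps \<subseteq> P' \<longrightarrow>
           vsum m (xs @ ps) = tl c \<longrightarrow> length ps \<le> Bf q'"
      by metis
    show "\<exists>B. \<forall>xs ps. length xs = q \<longrightarrow> set xs \<subseteq> S \<longrightarrow> set ps \<subseteq> P \<longrightarrow>
           vsum (Suc m) (xs @ ps) = c \<longrightarrow> length ps \<le> B"
    proof (intro exI[of _ "K + Max (Bf ` {..q+K})"] allI impI)
      fix xs ps assume xs: "length xs = q" "set xs \<subseteq> S" and ps: "set ps \<subseteq> P"
        and eq: "vsum (Suc m) (xs @ ps) = c"
      have lens: "\<forall>x\<in>set (xs @ ps). length x = Suc m" using xs ps Sl Pl by auto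
      have c: "c = sum_list (map hd (xs @ ps)) # vsum m (map tl (xs @ ps))"
        using vsum_Suc[OF lens] eq by simp
      define ps0 where "ps0 = filter (\<lambda>p. 0 < hd p) ps"
      define ps1 where "ps1 = filter (\<lambda>p. \<not> 0 < hd p) ps"
      have mps: "mset ps = mset (ps0 @ ps1)"
        unfolding ps0_def ps1_def by (simp add: multiset_partition[symmetric])
      have lenps: "length ps = length ps0 + length ps1"
        unfolding ps0_def ps1_def by (simp add: sum_length_filter_compl)
      have hd1: "\<forall>p\<in>set ps1. hd p = 0"
      proof
        fix p assume "p \<in> set ps1"
        then have "p \<in> P" "\<not> 0 < hd p" using ps unfolding ps1_def by auto
        then show "hd p = 0" using lexpos_hd(1)[of p m] Pl by force
      qed
      have s1: "sum_list (map hd ps1) = 0"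
        using hd1 by (induction ps1) auto
      have hdc: "hd c = sum_list (map hd xs) + sum_list (map hd ps0)"
      proof -
        have "hd c = sum_list (map hd xs) + sum_list (map hd ps)" using c by simp
        also have "sum_list (map hd ps) = sum_list (map hd (ps0 @ ps1))"
          using sum_list_map_perm[OF mps] .
        finally show ?thesis using s1 by simp
      qed
      have lx: "real q * L \<le> sum_list (map hd xs)"
        using sum_list_lower[of "map hd xs" L] xs L unfolding A0_def by auto
      have Q0: "\<forall>p\<in>set ps0. hd p \<in> Q" using ps unfolding ps0_def Q_def by auto
      have l0: "real (length ps0) * \<alpha> \<le> sum_list (map hd ps0)"
        using sum_list_lower[of "map hd ps0" \<alpha>] Q0 al(2) by auto
      have "real (length ps0) * \<alpha> \<le> hd c - real q * L" using hdc lx l0 by linarith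
      then have "real (length ps0) \<le> (hd c - real q * L) / \<alpha>" using al(1)
        by (simp add: field_simps)
      then have K0: "length ps0 \<le> K" unfolding K_def by linarith
      define ys where "ys = map hd (xs @ ps0)"
      have ysH: "set ys \<subseteq> Hs"
      proof -
        have "length ys = q + length ps0" unfolding ys_def using xs by simp
        moreover have "set ys \<subseteq> A0 \<union> Q" unfolding ys_def A0_def using xs Q0 by auto
        moreover have "sum_list ys = hd c" unfolding ys_def using hdc by simp
        ultimately have "ys \<in> {ys. length ys = q + length ps0 \<and> set ys \<subseteq> A0 \<union> Q \<and> sum_list ys = hd c}"
          by blast
        moreover have "q + length ps0 \<in> {..q+K}" using K0 by simp
        ultimately show ?thesis unfolding Hs_def by blast
      qed
      define xs' where "xs' = map tl (xs @ ps0)"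
      define ps' where "ps' = map tl ps1"
      have xs'S: "set xs' \<subseteq> S'"
      proof
        fix y assume "y \<in> set xs'"
        then obtain x where x: "x \<in> set (xs @ ps0)" "y = tl x" unfolding xs'_def by auto
        have "x \<in> S \<union> P" using x(1) xs ps unfolding ps0_def by auto
        moreover have "hd x \<in> Hs" using ysH x(1) unfolding ys_def by auto
        ultimately show "y \<in> S'" unfolding S'_def using x(2) by blast
      qed
      have ps'P: "set ps' \<subseteq> P'"
        unfolding ps'_def P'_def using hd1 ps unfolding ps1_def by auto
      have "mset (xs' @ ps') = mset (map tl (xs @ ps))"
        unfolding xs'_def ps'_def using mps by simp
      then have "vsum m (xs' @ ps') = tl c" using c vsum_perm by (metis list.sel(3))
      then have "length ps' \<le> Bf (length xs')" using Bf xs'S ps'P by blast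
      moreover have "Bf (length xs') \<le> Max (Bf ` {..q+K})"
        using K0 xs unfolding xs'_def by (intro Max_ge) auto
      ultimately have "length ps1 \<le> Max (Bf ` {..q+K})" unfolding ps'_def by simp
      then show "length ps \<le> K + Max (Bf ` {..q+K})" using lenps K0 by simp
    qed
  qed
qed


definition EE :: "nat \<Rightarrow> expo set" where
  "EE r = {e. length (snd e) = r}"

definition z0 :: "nat \<Rightarrow> expo" where
  "z0 r = (0, replicate r 0)"

definition emb :: "expo \<Rightarrow> real list" where
  "emb e = fst e # map real_of_int (snd e)"

lemma map_of_int_less: "(map real_of_int ns < map real_of_int ms) \<longleftrightarrow> ns < ms"
proof (induction ns arbitrary: ms)
  case Nil then show ?case by (cases ms) auto
next
  case (Cons a ns) then show ?case by (cases ms) auto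
qed

lemma map_of_int_inj: "(map real_of_int ns = map real_of_int ms) \<longleftrightarrow> ns = ms"
  by (simp add: inj_map_eq_map inj_on_def)

lemma emb_less: "emb x < emb y \<longleftrightarrow> x < y"
  by (cases x; cases y) (auto simp: emb_def map_of_int_less)

lemma emb_eq: "emb x = emb y \<longleftrightarrow> x = y"
  by (cases x; cases y) (auto simp: emb_def map_of_int_inj)

lemma emb_le: "emb x \<le> emb y \<longleftrightarrow> x \<le> y"
  using emb_less emb_eq by (metis order_le_less)

lemma length_emb[simp]: "length (emb x) = Suc (length (snd x))"
  by (simp add: emb_def)

lemma map_of_int_map2: "map real_of_int (map2 (+) ns ms) = map2 (+) (map real_of_int ns) (map real_of_int ms)"
proof (induction ns arbitrary: ms)
  case Nil then show ?case by simp
next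
  case (Cons a ns) then show ?case by (cases ms) auto
qed

lemma emb_add: "emb (expo_add x y) = vadd (emb x) (emb y)"
proof -
  have "emb (expo_add x y) = (fst x + fst y) # map real_of_int (map2 (+) (snd x) (snd y))"
    by (simp add: emb_def expo_add_def)
  also have "\<dots> = (fst x + fst y) # map2 (+) (map real_of_int (snd x)) (map real_of_int (snd y))"
    by (simp only: map_of_int_map2)
  also have "\<dots> = vadd (emb x) (emb y)" unfolding emb_def vadd_Cons by (simp add: vadd_def)
  finally show ?thesis .
qed

lemma emb_z0: "emb (z0 r) = replicate (Suc r) 0"
  by (simp add: emb_def z0_def)

lemma expo_add_comm: "expo_add x y = expo_add y x"
proof -
  have "map2 (+) (snd x) (snd y) = map2 (+) (snd y) (snd x)"
    by (intro nth_equalityI) auto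
  then show ?thesis by (simp add: expo_add_def)
qed

lemma expo_add_assoc: "expo_add (expo_add x y) z = expo_add x (expo_add y z)"
proof -
  have "map2 (+) (map2 (+) (snd x) (snd y)) (snd z) = map2 (+) (snd x) (map2 (+) (snd y) (snd z))"
    by (intro nth_equalityI) auto
  then show ?thesis by (simp add: expo_add_def)
qed

lemma expo_add_z0: "x \<in> EE r \<Longrightarrow> expo_add x (z0 r) = x"
proof -
  assume "x \<in> EE r"
  then have "map2 (+) (snd x) (replicate r 0) = snd x"
    by (intro nth_equalityI) (auto simp: EE_def)
  then show ?thesis by (simp add: expo_add_def z0_def)
qed

lemma expo_add_EE: "x \<in> EE r \<Longrightarrow> y \<in> EE r \<Longrightarrow> expo_add x y \<in> EE r"
  by (simp add: EE_def expo_add_def)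

lemma z0_EE: "z0 r \<in> EE r"
  by (simp add: EE_def z0_def)

interpretation ex: oag "EE r" expo_add
proof unfold_locales
  fix x y z assume "x \<in> EE r" "y \<in> EE r" "z \<in> EE r" "x < y"
  then have "vadd (emb x) (emb z) < vadd (emb y) (emb z)"
    by (intro vadd_less) (auto simp: EE_def emb_less)
  then show "expo_add x z < expo_add y z" by (simp add: emb_add[symmetric] emb_less)
qed (auto simp: expo_add_EE expo_add_comm)

lemma wo_emb: "well_ordered X \<Longrightarrow> well_ordered (emb ` X)"
  by (rule wo_image_mono) (auto simp: emb_le)

lemma expos_EE: "expos r \<subseteq> EE r"
  by (auto simp: expos_def EE_def)

lemma vsum_single: "length p = n \<Longrightarrow> vsum n [p] = p"
  by (intro nth_equalityI) (auto simp: vsum_def)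

lemma vsum_Cons: "length p = n \<Longrightarrow> vsum n (p # ps) = vadd p (vsum n ps)"
  using vsum_append[of n "[p]" ps] vsum_single by simp

lemma vsum_Nil: "vsum n [] = replicate n 0"
  by (intro nth_equalityI) (auto simp: vsum_def)


definition esum :: "expo set \<Rightarrow> expo set \<Rightarrow> expo set" where
  "esum A B = {expo_add a b | a b. a \<in> A \<and> b \<in> B}"

lemma esum_eq: "ex.sumset A B = esum A B"
  by (simp add: ex.sumset_def esum_def)

lemma esum_EE: "A \<subseteq> EE r \<Longrightarrow> B \<subseteq> EE r \<Longrightarrow> esum A B \<subseteq> EE r"
  unfolding esum_def using expo_add_EE by blast

lemma wo_esum: "A \<subseteq> EE r \<Longrightarrow> B \<subseteq> EE r \<Longrightarrow> well_ordered A \<Longrightarrow> well_ordered B \<Longrightarrow> well_ordered (esum A B)"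
  using ex.wo_sumset[of A r B] by (simp add: esum_eq)

lemma fin_esum_pairs:
  "A \<subseteq> EE r \<Longrightarrow> B \<subseteq> EE r \<Longrightarrow> well_ordered A \<Longrightarrow> well_ordered B \<Longrightarrow>
   finite {(a, b). a \<in> A \<and> b \<in> B \<and> expo_add a b = c}"
  using ex.fin_pairs[of A r B] by blast

lemma esumI: "a \<in> A \<Longrightarrow> b \<in> B \<Longrightarrow> expo_add a b = x \<Longrightarrow> x \<in> esum A B"
  unfolding esum_def by blast

lemma esumE: "x \<in> esum A B \<Longrightarrow> (\<And>a b. a \<in> A \<Longrightarrow> b \<in> B \<Longrightarrow> x = expo_add a b \<Longrightarrow> P) \<Longrightarrow> P"
  unfolding esum_def by blast

lemma esum_assoc: "esum (esum A B) C = esum A (esum B C)"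
proof (intro equalityI subsetI)
  fix x assume "x \<in> esum (esum A B) C"
  then obtain y c where y: "y \<in> esum A B" "c \<in> C" "x = expo_add y c" by (rule esumE)
  from y(1) obtain a b where ab: "a \<in> A" "b \<in> B" "y = expo_add a b" by (rule esumE)
  have "expo_add b c \<in> esum B C" using ab y by (intro esumI) auto
  then show "x \<in> esum A (esum B C)" using ab y by (intro esumI[of a A "expo_add b c"]) (auto simp: expo_add_assoc)
next
  fix x assume "x \<in> esum A (esum B C)"
  then obtain a y where y: "a \<in> A" "y \<in> esum B C" "x = expo_add a y" by (rule esumE)
  from y(2) obtain b c where bc: "b \<in> B" "c \<in> C" "y = expo_add b c" by (rule esumE)
  have "expo_add a b \<in> esum A B" using bc y by (intro esumI) auto
  then show "x \<in> esum (esum A B) C" using bc y by (intro esumI[of "expo_add a b" "esum A B" c]) (auto simp: expo_add_assoc)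
qed

lemma esum_comm: "esum A B = esum B A"
  unfolding esum_def using expo_add_comm by blast

lemma esum_mono: "A \<subseteq> A' \<Longrightarrow> B \<subseteq> B' \<Longrightarrow> esum A B \<subseteq> esum A' B'"
  unfolding esum_def by blast

definition pt :: "expo \<Rightarrow> tser" where
  "pt v = (\<lambda>e. if e = v then 1 else 0)"

definition Zs :: "nat \<Rightarrow> expo set" where
  "Zs r = {(-1, replicate r 0)} \<union> {(-1, ones_upto j r) | j. j < r}"

primrec ZZ :: "nat \<Rightarrow> nat \<Rightarrow> expo set" where
  "ZZ r 0 = {z0 r}"
| "ZZ r (Suc k) = esum (Zs r) (ZZ r k)"

primrec PP :: "nat \<Rightarrow> expo set \<Rightarrow> nat \<Rightarrow> expo set" where
  "PP r D 0 = {z0 r}"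
| "PP r D (Suc k) = esum D (PP r D k)"

lemma Zs_EE: "Zs r \<subseteq> EE r"
  by (auto simp: Zs_def EE_def ones_upto_def)

lemma finite_Zs: "finite (Zs r)"
proof -
  have "{(-1, ones_upto j r) | j. j < r} = (\<lambda>j. (-1, ones_upto j r)) ` {..<r}" by auto
  then show ?thesis unfolding Zs_def by simp
qed

lemma ZZ_EE: "ZZ r k \<subseteq> EE r"
proof (induction k)
  case 0 then show ?case by (simp add: z0_EE)
next
  case (Suc k) then show ?case using esum_EE[OF Zs_EE Suc.IH] by simp
qed

lemma wo_ZZ: "well_ordered (ZZ r k)"
proof (induction k)
  case 0 then show ?case by (simp add: wo_finite)
next
  case (Suc k)
  then show ?case using wo_esum[OF Zs_EE ZZ_EE wo_finite[OF finite_Zs]] by simp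
qed

lemma PP_EE: "D \<subseteq> EE r \<Longrightarrow> PP r D k \<subseteq> EE r"
proof (induction k)
  case 0 then show ?case by (simp add: z0_EE)
next
  case (Suc k) then show ?case using esum_EE[OF Suc.prems Suc.IH] by simp
qed

lemma wo_PP: "D \<subseteq> EE r \<Longrightarrow> well_ordered D \<Longrightarrow> well_ordered (PP r D k)"
proof (induction k)
  case 0 then show ?case by (simp add: wo_finite)
next
  case (Suc k)
  then show ?case using wo_esum[OF _ PP_EE] by simp
qed

lemma supp_tmult: "supp (tmult f g) \<subseteq> esum (supp f) (supp g)"
proof
  fix e assume "e \<in> supp (tmult f g)"
  then have "tmult f g e \<noteq> 0" by (simp add: supp_def)
  then have "{(e1, e2). e1 \<in> supp f \<and> e2 \<in> supp g \<and> expo_add e1 e2 = e} \<noteq> {}"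
    unfolding tmult_def by force
  then show "e \<in> esum (supp f) (supp g)" unfolding esum_def by blast
qed

lemma tmult_sum:
  assumes "supp f \<subseteq> X" "supp g \<subseteq> Y" "finite {(x, y). x \<in> X \<and> y \<in> Y \<and> expo_add x y = e}"
  shows "tmult f g e = (\<Sum>(x, y)\<in>{(x, y). x \<in> X \<and> y \<in> Y \<and> expo_add x y = e}. f x * g y)"
  unfolding tmult_def
proof (rule sum.mono_neutral_left[OF assms(3)])
  show "{(e1, e2). e1 \<in> supp f \<and> e2 \<in> supp g \<and> expo_add e1 e2 = e}
        \<subseteq> {(x, y). x \<in> X \<and> y \<in> Y \<and> expo_add x y = e}" using assms(1,2) by auto
next
  show "\<forall>i\<in>{(x, y). x \<in> X \<and> y \<in> Y \<and> expo_add x y = e} -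
          {(e1, e2). e1 \<in> supp f \<and> e2 \<in> supp g \<and> expo_add e1 e2 = e}.
         (case i of (e1, e2) \<Rightarrow> f e1 * g e2) = 0"
    by (auto simp: supp_def)
qed

lemma tpow_Suc: "tpow r f (Suc k) = tmult f (tpow r f k)"
  by (simp add: tpow_def)

lemma supp_tmonom0: "supp (tmonom r 0) = {z0 r}"
  by (auto simp: supp_def tmonom_def z0_def)

lemma supp_tpow: "supp f \<subseteq> D \<Longrightarrow> supp (tpow r f k) \<subseteq> PP r D k"
proof (induction k)
  case 0 then show ?case by (simp add: tpow_def supp_tmonom0)
next
  case (Suc k)
  then show ?case
    using supp_tmult[of f "tpow r f k"] esum_mono[OF Suc.prems Suc.IH[OF Suc.prems]]
    by (simp add: tpow_Suc)
qed

lemma length_ones_upto[simp]: "length (ones_upto j n) = n"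
  by (simp add: ones_upto_def)

lemma supp_tderiv:
  assumes "supp g \<subseteq> EE r"
  shows "supp (tderiv g) \<subseteq> esum (supp g) (Zs r)"
proof
  fix e assume "e \<in> supp (tderiv g)"
  obtain b m where e: "e = (b, m)" by (cases e)
  have ne: "tderiv g (b, m) \<noteq> 0" using \<open>e \<in> supp (tderiv g)\<close> e by (simp add: supp_def)
  show "e \<in> esum (supp g) (Zs r)"
  proof (cases "g (b + 1, m) = 0")
    case False
    then have inS: "(b + 1, m) \<in> supp g" by (simp add: supp_def)
    then have lm: "length m = r" using assms by (auto simp: EE_def)
    have "map2 (+) m (replicate r 0) = m" using lm by (intro nth_equalityI) auto
    then have "expo_add (b + 1, m) (-1, replicate r 0) = (b, m)" by (simp add: expo_add_def)
    moreover have "(-1, replicate r 0) \<in> Zs r" by (simp add: Zs_def)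
    ultimately show ?thesis unfolding e using inS by (intro esumI) auto
  next
    case True
    then have "(\<Sum>j<length m. (of_int (m ! j) - 1) * g (b + 1, map2 (-) m (ones_upto j (length m)))) \<noteq> 0"
      using ne by (simp add: tderiv_def)
    then obtain j where j: "j < length m" "g (b + 1, map2 (-) m (ones_upto j (length m))) \<noteq> 0"
      by (metis (no_types, lifting) lessThan_iff mult_zero_right sum.neutral)
    let ?v = "(b + 1, map2 (-) m (ones_upto j (length m)))"
    have inS: "?v \<in> supp g" using j by (simp add: supp_def)
    then have lm: "length m = r" using assms by (auto simp: EE_def)
    have "map2 (+) (map2 (-) m (ones_upto j (length m))) (ones_upto j r) = m"
      using lm by (intro nth_equalityI) auto
    then have "expo_add ?v (-1, ones_upto j r) = (b, m)" by (simp add: expo_add_def)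
    moreover have "(-1, ones_upto j r) \<in> Zs r" using j lm by (auto simp: Zs_def)
    ultimately show ?thesis unfolding e using inS by (intro esumI) auto
  qed
qed

lemma supp_tderiv_pow:
  assumes "supp g \<subseteq> X" "X \<subseteq> EE r"
  shows "supp ((tderiv ^^ k) g) \<subseteq> esum X (ZZ r k)"
proof (induction k)
  case 0
  have "X \<subseteq> esum X {z0 r}"
  proof
    fix x assume "x \<in> X"
    then have "expo_add x (z0 r) = x" using assms(2) expo_add_z0 by blast
    then show "x \<in> esum X {z0 r}" using \<open>x \<in> X\<close> by (intro esumI) auto
  qed
  then show ?case using assms(1) by simp
next
  case (Suc k)
  have E: "esum X (ZZ r k) \<subseteq> EE r" using esum_EE[OF assms(2) ZZ_EE] .
  have "supp ((tderiv ^^ Suc k) g) = supp (tderiv ((tderiv ^^ k) g))" by simp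
  also have "\<dots> \<subseteq> esum (supp ((tderiv ^^ k) g)) (Zs r)"
    using supp_tderiv Suc.IH E by blast
  also have "\<dots> \<subseteq> esum (esum X (ZZ r k)) (Zs r)" using esum_mono Suc.IH by blast
  also have "\<dots> = esum X (esum (ZZ r k) (Zs r))" by (rule esum_assoc)
  also have "\<dots> = esum X (ZZ r (Suc k))" by (simp add: esum_comm)
  finally show ?case .
qed

definition Nb :: "expo \<Rightarrow> expo set" where
  "Nb u = {(fst u + 1, snd u)} \<union>
     (\<lambda>j. (fst u + 1, map2 (-) (snd u) (ones_upto j (length (snd u))))) ` {..<length (snd u)}"

lemma finite_Nb: "finite (Nb u)"
  by (simp add: Nb_def)

lemma tderiv_local:
  assumes "\<forall>w\<in>Nb u. g w = h w"
  shows "tderiv g u = tderiv h u"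
proof -
  obtain b m where u: "u = (b, m)" by (cases u)
  have "g (b + 1, m) = h (b + 1, m)" using assms u by (simp add: Nb_def)
  moreover have "\<forall>j\<in>{..<length m}. g (b + 1, map2 (-) m (ones_upto j (length m))) =
      h (b + 1, map2 (-) m (ones_upto j (length m)))" using assms u by (simp add: Nb_def)
  moreover have "(\<Sum>j<length m. (of_int (m ! j) - 1) * g (b + 1, map2 (-) m (ones_upto j (length m)))) =
      (\<Sum>j<length m. (of_int (m ! j) - 1) * h (b + 1, map2 (-) m (ones_upto j (length m))))"
    using calculation(2) by (intro sum.cong refl) simp
  ultimately show ?thesis unfolding u tderiv_def by simp
qed

lemma tderiv_lin:
  "tderiv (\<lambda>e. \<Sum>v\<in>F. c v * h v e) = (\<lambda>e. \<Sum>v\<in>F. c v * tderiv (h v) e)"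
proof (rule ext)
  fix e :: expo
  obtain b m where e: "e = (b, m)" by (cases e)
  have "tderiv (\<lambda>e. \<Sum>v\<in>F. c v * h v e) (b, m) =
     (\<Sum>v\<in>F. (b + 1) * (c v * h v (b + 1, m))) +
     (\<Sum>j<length m. \<Sum>v\<in>F. (of_int (m ! j) - 1) * (c v * h v (b + 1, map2 (-) m (ones_upto j (length m)))))"
    by (simp add: tderiv_def sum_distrib_left)
  also have "\<dots> = (\<Sum>v\<in>F. (b + 1) * (c v * h v (b + 1, m))) +
     (\<Sum>v\<in>F. \<Sum>j<length m. (of_int (m ! j) - 1) * (c v * h v (b + 1, map2 (-) m (ones_upto j (length m)))))"
    by (simp only: sum.swap[of _ "{..<length m}" F])
  also have "\<dots> = (\<Sum>v\<in>F. c v * tderiv (h v) (b, m))"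
    by (simp add: tderiv_def sum.distrib sum_distrib_left algebra_simps)
  finally show "tderiv (\<lambda>e. \<Sum>v\<in>F. c v * h v e) e = (\<Sum>v\<in>F. c v * tderiv (h v) e)"
    using e by simp
qed

lemma tderiv_pow_lin:
  "(tderiv ^^ k) (\<lambda>e. \<Sum>v\<in>F. c v * h v e) = (\<lambda>e. \<Sum>v\<in>F. c v * (tderiv ^^ k) (h v) e)"
proof (induction k)
  case 0 then show ?case by simp
next
  case (Suc k)
  have "(tderiv ^^ Suc k) (\<lambda>e. \<Sum>v\<in>F. c v * h v e) = tderiv ((tderiv ^^ k) (\<lambda>e. \<Sum>v\<in>F. c v * h v e))"
    by simp
  also have "\<dots> = tderiv (\<lambda>e. \<Sum>v\<in>F. c v * (tderiv ^^ k) (h v) e)" using Suc.IH by simp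
  also have "\<dots> = (\<lambda>e. \<Sum>v\<in>F. c v * tderiv ((tderiv ^^ k) (h v)) e)" by (rule tderiv_lin)
  finally show ?case by simp
qed

primrec GG :: "nat \<Rightarrow> expo \<Rightarrow> expo set" where
  "GG 0 u = {u}"
| "GG (Suc k) u = (\<Union>v\<in>Nb u. GG k v)"

lemma finite_GG: "finite (GG k u)"
proof (induction k arbitrary: u)
  case 0 then show ?case by simp
next
  case (Suc k) then show ?case by (simp add: finite_Nb)
qed

lemma tderiv_pow_local:
  "(\<forall>w\<in>GG k u. g w = h w) \<Longrightarrow> (tderiv ^^ k) g u = (tderiv ^^ k) h u"
proof (induction k arbitrary: u)
  case 0 then show ?case by simp
next
  case (Suc k)
  have "\<forall>v\<in>Nb u. (tderiv ^^ k) g v = (tderiv ^^ k) h v"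
  proof
    fix v assume "v \<in> Nb u"
    then have "\<forall>w\<in>GG k v. g w = h w" using Suc.prems by auto
    then show "(tderiv ^^ k) g v = (tderiv ^^ k) h v" by (rule Suc.IH)
  qed
  then have "tderiv ((tderiv ^^ k) g) u = tderiv ((tderiv ^^ k) h) u" by (rule tderiv_local)
  then show ?case by simp
qed

lemma tderiv_pow_repr:
  "(tderiv ^^ k) g u = (\<Sum>v\<in>GG k u. g v * (tderiv ^^ k) (pt v) u)"
proof -
  let ?h = "\<lambda>e. \<Sum>v\<in>GG k u. g v * pt v e"
  have "\<forall>w\<in>GG k u. g w = ?h w"
  proof
    fix w assume w: "w \<in> GG k u"
    have "?h w = (\<Sum>v\<in>GG k u. if v = w then g v else 0)"
      by (intro sum.cong) (auto simp: pt_def)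
    also have "\<dots> = g w" using w finite_GG by simp
    finally show "g w = ?h w" by simp
  qed
  then have "(tderiv ^^ k) g u = (tderiv ^^ k) ?h u" by (rule tderiv_pow_local)
  also have "\<dots> = (\<Sum>v\<in>GG k u. g v * (tderiv ^^ k) (pt v) u)"
    by (simp add: tderiv_pow_lin)
  finally show ?thesis .
qed


definition eps :: "nat \<Rightarrow> tser \<Rightarrow> tser" where
  "eps r \<phi> = (\<lambda>e. \<phi> e - tmonom r 1 e)"

definition one :: "nat \<Rightarrow> expo" where
  "one r = (1, replicate r 0)"

lemma tcomp_unfold:
  "tcomp r g \<phi> e = (\<Sum>k. tmult ((tderiv ^^ k) g) (tpow r (eps r \<phi>) k) e / fact k)"
  by (simp add: tcomp_def eps_def Let_def)

lemma eps_props: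
  assumes "\<phi> \<in> Lr0 r"
  shows "supp (eps r \<phi>) \<subseteq> EE r" "well_ordered (supp (eps r \<phi>))" "\<forall>d\<in>supp (eps r \<phi>). one r < d"
proof -
  have sub: "supp (eps r \<phi>) \<subseteq> supp \<phi> - {one r}"
  proof
    fix e assume "e \<in> supp (eps r \<phi>)"
    then have ne: "\<phi> e - tmonom r 1 e \<noteq> 0" by (simp add: supp_def eps_def)
    show "e \<in> supp \<phi> - {one r}"
    proof (cases "e = one r")
      case True
      then have "\<phi> e = 1" using assms by (simp add: Lr0_def one_def)
      moreover have "tmonom r 1 e = 1" using True by (simp add: tmonom_def one_def)
      ultimately show ?thesis using ne by simp
    next
      case False
      then have "tmonom r 1 e = 0" by (simp add: tmonom_def one_def)
      then show ?thesis using ne False by (simp add: supp_def)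
    qed
  qed
  have L: "well_ordered (supp \<phi>)" "supp \<phi> \<subseteq> expos r" using assms by (auto simp: Lr0_def Lr_def)
  show "supp (eps r \<phi>) \<subseteq> EE r" using sub L(2) expos_EE by blast
  show "well_ordered (supp (eps r \<phi>))" using sub L(1) wo_subset by blast
  show "\<forall>d\<in>supp (eps r \<phi>). one r < d"
  proof
    fix d assume "d \<in> supp (eps r \<phi>)"
    then have "d \<in> supp \<phi>" "d \<noteq> one r" using sub by auto
    moreover have "one r \<le> d" using assms \<open>d \<in> supp \<phi>\<close> by (simp add: Lr0_def one_def)
    ultimately show "one r < d" by simp
  qed
qed

lemma ones_upto_ge: "replicate r 0 \<le> ones_upto j r"
proof (cases r)
  case 0 then show ?thesis by (simp add: ones_upto_def)
next
  case (Suc r')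
  have "[0..<Suc r'] = 0 # [1..<Suc r']" by (simp add: upt_conv_Cons)
  then have "ones_upto j r = 1 # map (\<lambda>i. if i \<le> j then 1 else 0) [1..<Suc r']"
    using Suc by (simp add: ones_upto_def)
  then show ?thesis using Suc by simp
qed

lemma one_EE: "one r \<in> EE r" by (simp add: one_def EE_def)

lemma zd_pos:
  assumes "z \<in> Zs r" "d \<in> EE r" "one r < d"
  shows "z0 r < expo_add z d"
proof -
  have zE: "z \<in> EE r" using assms(1) Zs_EE by blast
  have mE: "(-1, replicate r 0) \<in> EE r" by (simp add: EE_def)
  have zge: "(-1, replicate r 0) \<le> z" using assms(1) ones_upto_ge by (auto simp: Zs_def)
  have "expo_add (one r) (-1, replicate r 0) < expo_add d z"
    using ex.smono2[OF one_EE assms(2) mE zE assms(3) zge] .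
  moreover have "expo_add (one r) (-1, replicate r 0) = z0 r"
    by (simp add: one_def expo_add_def z0_def)
  ultimately show ?thesis by (simp add: expo_add_comm)
qed

lemma swap4: "expo_add (expo_add z a') (expo_add d b') = expo_add (expo_add z d) (expo_add a' b')"
  by (metis expo_add_assoc expo_add_comm)

lemma pos:
  assumes "\<forall>d\<in>D. one r < d" "D \<subseteq> EE r"
  shows "a \<in> ZZ r k \<Longrightarrow> b \<in> PP r D k \<Longrightarrow>
    (k = 0 \<longrightarrow> expo_add a b = z0 r) \<and> (0 < k \<longrightarrow> z0 r < expo_add a b) \<and>
    (\<exists>ps. length ps = k \<and> set ps \<subseteq> emb ` esum (Zs r) D \<and> emb (expo_add a b) = vsum (Suc r) ps)"
proof (induction k arbitrary: a b)
  case 0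
  then have "a = z0 r" "b = z0 r" by auto
  then have "expo_add a b = z0 r" using expo_add_z0[OF z0_EE] by simp
  moreover have "emb (z0 r) = vsum (Suc r) []" by (simp add: emb_z0 vsum_Nil)
  ultimately show ?case by auto
next
  case (Suc k)
  from Suc.prems(1) obtain z a' where za: "z \<in> Zs r" "a' \<in> ZZ r k" "a = expo_add z a'"
    by (auto elim: esumE)
  from Suc.prems(2) obtain d b' where db: "d \<in> D" "b' \<in> PP r D k" "b = expo_add d b'"
    by (auto elim: esumE)
  let ?s = "expo_add z d" and ?t = "expo_add a' b'"
  have ab: "expo_add a b = expo_add ?s ?t" using za db swap4 by simp
  have sE: "?s \<in> EE r" using za(1) db(1) assms(2) Zs_EE expo_add_EE by blast
  have tE: "?t \<in> EE r" using za(2) db(2) ZZ_EE PP_EE[OF assms(2)] expo_add_EE by blast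
  have spos: "z0 r < ?s" using zd_pos za(1) db(1) assms by blast
  from Suc.IH[OF za(2) db(2)] have IH1: "z0 r \<le> ?t"
    by (cases k) auto
  from Suc.IH[OF za(2) db(2)] obtain ps where ps: "length ps = k" "set ps \<subseteq> emb ` esum (Zs r) D"
      "emb ?t = vsum (Suc r) ps" by blast
  have "expo_add (z0 r) (z0 r) < expo_add ?s ?t"
    using ex.smono2[OF z0_EE sE z0_EE tE spos IH1] .
  then have pos': "z0 r < expo_add a b" using ab expo_add_z0[OF z0_EE] by simp
  have "?s \<in> esum (Zs r) D" using za(1) db(1) by (intro esumI) auto
  then have "set (emb ?s # ps) \<subseteq> emb ` esum (Zs r) D" using ps by auto
  moreover have "emb (expo_add a b) = vsum (Suc r) (emb ?s # ps)"
  proof -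
    have e1: "emb (expo_add a b) = vadd (emb ?s) (emb ?t)" by (subst ab) (rule emb_add)
    have e2: "length (emb ?s) = Suc r" using sE by (simp add: EE_def)
    have "vsum (Suc r) (emb ?s # ps) = vadd (emb ?s) (vsum (Suc r) ps)" using e2 by (rule vsum_Cons)
    then show ?thesis using e1 ps(3) by simp
  qed
  ultimately have ex: "\<exists>ps'. length ps' = Suc k \<and> set ps' \<subseteq> emb ` esum (Zs r) D \<and>
      emb (expo_add a b) = vsum (Suc r) ps'"
    using ps(1) by (intro exI[of _ "emb ?s # ps"]) simp
  show ?case using pos' ex by simp
qed


lemma Nbound:
  assumes phi: "\<phi> \<in> Lr0 r" and wU: "well_ordered U" and UE: "U \<subseteq> EE r"
  shows "\<exists>N. \<forall>k\<ge>N. \<forall>x\<in>esum U (ZZ r k). \<forall>y\<in>PP r (supp (eps r \<phi>)) k. expo_add x y \<noteq> e"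
proof -
  let ?D = "supp (eps r \<phi>)"
  have DE: "?D \<subseteq> EE r" and wD: "well_ordered ?D" and Dpos: "\<forall>d\<in>?D. one r < d"
    using eps_props[OF phi] by auto
  let ?S = "emb ` U" and ?P = "emb ` esum (Zs r) ?D"
  have wS: "well_ordered ?S" using wo_emb[OF wU] .
  have Sl: "\<forall>x\<in>?S. length x = Suc r" using UE by (auto simp: EE_def)
  have wP: "well_ordered ?P"
    using wo_emb[OF wo_esum[OF Zs_EE DE wo_finite[OF finite_Zs] wD]] .
  have Pl: "\<forall>p\<in>?P. length p = Suc r \<and> replicate (Suc r) 0 < p"
  proof
    fix p assume "p \<in> ?P"
    then obtain s where s: "s \<in> esum (Zs r) ?D" "p = emb s" by blast
    from s(1) obtain z d where zd: "z \<in> Zs r" "d \<in> ?D" "s = expo_add z d" by (rule esumE)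
    have "z0 r < s" using zd_pos[of z r d] zd DE Dpos by blast
    then have "emb (z0 r) < emb s" by (simp add: emb_less)
    moreover have "s \<in> EE r" using zd Zs_EE DE expo_add_EE by blast
    ultimately show "length p = Suc r \<and> replicate (Suc r) 0 < p" using s(2) by (simp add: emb_z0 EE_def)
  qed
  obtain B where B: "\<forall>xs ps. length xs = 1 \<longrightarrow> set xs \<subseteq> ?S \<longrightarrow> set ps \<subseteq> ?P \<longrightarrow>
           vsum (Suc r) (xs @ ps) = emb e \<longrightarrow> length ps \<le> B"
    using NL[of "Suc r"] wS Sl wP Pl by blast
  show ?thesis
  proof (intro exI[of _ "Suc B"] allI impI ballI notI)
    fix k x y assume k: "Suc B \<le> k" and x: "x \<in> esum U (ZZ r k)" and y: "y \<in> PP r ?D k"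
      and xy: "expo_add x y = e"
    from x obtain w a where wa: "w \<in> U" "a \<in> ZZ r k" "x = expo_add w a" by (rule esumE)
    obtain ps where ps: "length ps = k" "set ps \<subseteq> ?P" "emb (expo_add a y) = vsum (Suc r) ps"
      using pos[OF Dpos DE wa(2) y] by blast
    have "e = expo_add w (expo_add a y)" using xy wa(3) by (simp add: expo_add_assoc)
    then have "emb e = vadd (emb w) (vsum (Suc r) ps)" using ps(3) by (simp add: emb_add)
    also have "\<dots> = vsum (Suc r) ([emb w] @ ps)"
      using vsum_append[of "Suc r" "[emb w]" ps] vsum_single[of "emb w" "Suc r"] wa(1) UE
      by (auto simp: EE_def)
    finally have "vsum (Suc r) ([emb w] @ ps) = emb e" by simp
    moreover have "set [emb w] \<subseteq> ?S" using wa(1) by simp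
    ultimately have "length ps \<le> B" using B ps(2) by (metis length_Cons list.size(3) One_nat_def)
    then show False using k ps(1) by simp
  qed
qed

lemma tri:
  assumes phi: "\<phi> \<in> Lr0 r" and vE: "v \<in> EE r"
    and nz1: "(tderiv ^^ k) (pt v) x \<noteq> 0" and nz2: "tpow r (eps r \<phi>) k y \<noteq> 0"
    and xy: "expo_add x y = e"
  shows "(k = 0 \<and> e = v) \<or> (0 < k \<and> v < e)"
proof (cases k)
  case 0
  then have "x = v" using nz1 by (simp add: pt_def split: if_splits)
  moreover have "y = z0 r" using nz2 0 supp_tmonom0[of r] by (auto simp: tpow_def supp_def)
  ultimately show ?thesis using xy 0 expo_add_z0[OF vE] by simp
next
  case (Suc k')
  let ?D = "supp (eps r \<phi>)"
  have DE: "?D \<subseteq> EE r" and Dpos: "\<forall>d\<in>?D. one r < d" using eps_props[OF phi] by auto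
  have "supp (pt v) \<subseteq> {v}" by (auto simp: supp_def pt_def)
  then have "supp ((tderiv ^^ k) (pt v)) \<subseteq> esum {v} (ZZ r k)"
    using supp_tderiv_pow[of "pt v" "{v}" r k] vE by blast
  then have "x \<in> esum {v} (ZZ r k)" using nz1 by (auto simp: supp_def)
  then obtain a where a: "a \<in> ZZ r k" "x = expo_add v a" by (auto elim: esumE)
  have "y \<in> PP r ?D k" using supp_tpow[of "eps r \<phi>" ?D r k] nz2 by (auto simp: supp_def)
  then have p: "z0 r < expo_add a y" using pos[OF Dpos DE a(1)] Suc by blast
  have tE: "expo_add a y \<in> EE r"
    using a(1) \<open>y \<in> PP r ?D k\<close> ZZ_EE PP_EE[OF DE] expo_add_EE by blast
  have "expo_add (z0 r) v < expo_add (expo_add a y) v" using ex.smono[OF z0_EE tE vE p] .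
  then have "v < expo_add v (expo_add a y)" using expo_add_z0[OF vE] by (simp add: expo_add_comm)
  then have "v < e" using xy a(2) by (simp add: expo_add_assoc)
  then show ?thesis using Suc by simp
qed


lemma repr:
  assumes phi: "\<phi> \<in> Lr0 r" and wU: "well_ordered U" and UE: "U \<subseteq> EE r"
  shows "\<exists>(I :: (nat \<times> (expo \<times> expo) \<times> expo) set) coef vv. finite I \<and>
    (\<forall>g. supp g \<subseteq> U \<longrightarrow> tcomp r g \<phi> e = (\<Sum>i\<in>I. g (vv i) * coef i)) \<and>
    (\<forall>i\<in>I. coef i \<noteq> 0 \<longrightarrow> vv i \<in> U \<longrightarrow> vv i = e \<or> vv i < e) \<and>
    (e \<in> U \<longrightarrow> (\<Sum>i\<in>{i\<in>I. vv i = e}. coef i) = 1)"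
proof -
  obtain N where N: "\<forall>k\<ge>N. \<forall>x\<in>esum U (ZZ r k). \<forall>y\<in>PP r (supp (eps r \<phi>)) k. expo_add x y \<noteq> e"
    using Nbound[OF phi wU UE] by blast
  define \<epsilon> where "\<epsilon> = eps r \<phi>"
  define D where "D = supp \<epsilon>"
  have DE: "D \<subseteq> EE r" and wD: "well_ordered D" using eps_props[OF phi] by (auto simp: D_def \<epsilon>_def)
  define pairs where "pairs k = {(x, y). x \<in> esum U (ZZ r k) \<and> y \<in> PP r D k \<and> expo_add x y = e}" for k
  have fpairs: "finite (pairs k)" for k
    unfolding pairs_def
    by (rule fin_esum_pairs[OF esum_EE[OF UE ZZ_EE] PP_EE[OF DE] wo_esum[OF UE ZZ_EE wU wo_ZZ] wo_PP[OF DE wD]])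
  have pempty: "pairs k = {}" if "N \<le> k" for k
    unfolding pairs_def using N[rule_format, OF that] by (auto simp: D_def \<epsilon>_def)
  define I where "I = (SIGMA k:{..<N}. SIGMA xy:pairs k. GG k (fst xy))"
  define coef where "coef = (\<lambda>(k, xy, v). (tderiv ^^ k) (pt v) (fst xy) * tpow r \<epsilon> k (snd xy) / fact k)"
  define vv :: "nat \<times> (expo \<times> expo) \<times> expo \<Rightarrow> expo" where "vv = (\<lambda>i. snd (snd i))"
  have fI: "finite I" unfolding I_def by (intro finite_SigmaI finite_lessThan fpairs finite_GG)
  have A: "tcomp r g \<phi> e = (\<Sum>i\<in>I. g (vv i) * coef i)" if sg: "supp g \<subseteq> U" for g
  proof -
    have T: "tmult ((tderiv ^^ k) g) (tpow r \<epsilon> k) e =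
        (\<Sum>(x, y)\<in>pairs k. (tderiv ^^ k) g x * tpow r \<epsilon> k y)" for k
      unfolding pairs_def
      by (rule tmult_sum[OF supp_tderiv_pow[OF sg UE] supp_tpow[of \<epsilon> D r k]])
         (use fpairs[of k] D_def in \<open>auto simp: pairs_def\<close>)
    have "tcomp r g \<phi> e = (\<Sum>k. tmult ((tderiv ^^ k) g) (tpow r \<epsilon> k) e / fact k)"
      by (simp add: tcomp_unfold \<epsilon>_def)
    also have "\<dots> = (\<Sum>k<N. tmult ((tderiv ^^ k) g) (tpow r \<epsilon> k) e / fact k)"
    proof (rule suminf_finite)
      fix k assume "k \<notin> {..<N}"
      then have "pairs k = {}" using pempty by simp
      then show "tmult ((tderiv ^^ k) g) (tpow r \<epsilon> k) e / fact k = 0" using T[of k] by simp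
    qed simp
    also have "\<dots> = (\<Sum>k<N. \<Sum>xy\<in>pairs k. \<Sum>v\<in>GG k (fst xy). g v * coef (k, xy, v))"
    proof (rule sum.cong[OF refl])
      fix k
      have "tmult ((tderiv ^^ k) g) (tpow r \<epsilon> k) e / fact k =
          (\<Sum>xy\<in>pairs k. (tderiv ^^ k) g (fst xy) * tpow r \<epsilon> k (snd xy) / fact k)"
        using T[of k] by (simp add: sum_divide_distrib case_prod_beta)
      also have "\<dots> = (\<Sum>xy\<in>pairs k. \<Sum>v\<in>GG k (fst xy). g v * coef (k, xy, v))"
      proof (rule sum.cong[OF refl])
        fix xy :: "expo \<times> expo"
        have "(tderiv ^^ k) g (fst xy) * tpow r \<epsilon> k (snd xy) / fact k =
            (\<Sum>v\<in>GG k (fst xy). g v * (tderiv ^^ k) (pt v) (fst xy)) * (tpow r \<epsilon> k (snd xy) / fact k)"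
          by (simp add: tderiv_pow_repr[of k g "fst xy"])
        also have "\<dots> = (\<Sum>v\<in>GG k (fst xy). g v * coef (k, xy, v))"
          unfolding sum_distrib_right by (intro sum.cong refl) (simp add: coef_def)
        finally show "(tderiv ^^ k) g (fst xy) * tpow r \<epsilon> k (snd xy) / fact k =
            (\<Sum>v\<in>GG k (fst xy). g v * coef (k, xy, v))" .
      qed
      finally show "tmult ((tderiv ^^ k) g) (tpow r \<epsilon> k) e / fact k =
          (\<Sum>xy\<in>pairs k. \<Sum>v\<in>GG k (fst xy). g v * coef (k, xy, v))" .
    qed
    also have "\<dots> = (\<Sum>k<N. \<Sum>(xy, v)\<in>(SIGMA xy:pairs k. GG k (fst xy)). g v * coef (k, xy, v))"
      by (intro sum.cong refl sum.Sigma) (auto simp: fpairs finite_GG)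
    also have "\<dots> = (\<Sum>(k, xyv)\<in>I. (case xyv of (xy, v) \<Rightarrow> g v * coef (k, xy, v)))"
      unfolding I_def by (rule sum.Sigma) (auto simp: fpairs finite_GG intro: finite_SigmaI)
    also have "\<dots> = (\<Sum>i\<in>I. g (vv i) * coef i)"
      by (intro sum.cong refl) (auto simp: vv_def)
    finally show ?thesis .
  qed
  have B: "\<forall>i\<in>I. coef i \<noteq> 0 \<longrightarrow> vv i \<in> U \<longrightarrow> vv i = e \<or> vv i < e"
  proof (intro ballI impI)
    fix i assume i: "i \<in> I" "coef i \<noteq> 0" "vv i \<in> U"
    obtain k x y v where iv: "i = (k, (x, y), v)" by (cases i) auto
    have "(x, y) \<in> pairs k" using i(1) iv unfolding I_def by auto
    then have xy: "expo_add x y = e" unfolding pairs_def by auto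
    have nz: "(tderiv ^^ k) (pt v) x \<noteq> 0" "tpow r (eps r \<phi>) k y \<noteq> 0"
      using i(2) iv by (auto simp: coef_def \<epsilon>_def)
    have "v \<in> EE r" using i(3) iv UE by (auto simp: vv_def)
    from tri[OF phi this nz xy] show "vv i = e \<or> vv i < e" using iv by (auto simp: vv_def)
  qed
  have C: "(\<Sum>i\<in>{i\<in>I. vv i = e}. coef i) = 1" if eU: "e \<in> U"
  proof -
    have eE: "e \<in> EE r" using eU UE by blast
    let ?i0 = "(0::nat, (e, z0 r), e)"
    have N0: "0 < N"
    proof (rule ccontr)
      assume "\<not> 0 < N"
      then have "pairs 0 = {}" using pempty by simp
      moreover have "(e, z0 r) \<in> pairs 0"
        unfolding pairs_def using esumI[of e U "z0 r" "{z0 r}" e] eU expo_add_z0[OF eE] by simp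
      ultimately show False by simp
    qed
    have "(e, z0 r) \<in> pairs 0"
      unfolding pairs_def using esumI[of e U "z0 r" "{z0 r}" e] eU expo_add_z0[OF eE] by simp
    then have i0I: "?i0 \<in> {i\<in>I. vv i = e}"
      unfolding I_def using N0 by (simp add: vv_def)
    have c0: "coef ?i0 = 1"
      by (simp add: coef_def pt_def tpow_def tmonom_def z0_def)
    have rest: "coef i = 0" if "i \<in> {i\<in>I. vv i = e} - {?i0}" for i
    proof (rule ccontr)
      assume cz: "coef i \<noteq> 0"
      obtain k x y v where iv: "i = (k, (x, y), v)" by (cases i) auto
      have v: "v = e" using that iv by (simp add: vv_def)
      have "(x, y) \<in> pairs k" using that iv unfolding I_def by auto
      then have xy: "expo_add x y = e" and xB: "x \<in> esum U (ZZ r k)" and yP: "y \<in> PP r D k"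
        unfolding pairs_def by auto
      have nz: "(tderiv ^^ k) (pt v) x \<noteq> 0" "tpow r (eps r \<phi>) k y \<noteq> 0"
        using cz iv by (auto simp: coef_def \<epsilon>_def)
      have "k = 0" using tri[OF phi _ nz xy] v eE by auto
      then have "y = z0 r" using yP by simp
      moreover have "x \<in> EE r" using xB esum_EE[OF UE ZZ_EE] by blast
      ultimately have "x = e" using xy expo_add_z0 by metis
      then have "i = ?i0" using iv v \<open>k = 0\<close> \<open>y = z0 r\<close> by simp
      then show False using that by simp
    qed
    have fin1: "finite {i\<in>I. vv i = e}" using fI by simp
    have "(\<Sum>i\<in>{i\<in>I. vv i = e}. coef i) = coef ?i0 + (\<Sum>i\<in>{i\<in>I. vv i = e} - {?i0}. coef i)"
      using sum.remove[OF fin1 i0I] by simp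
    also have "(\<Sum>i\<in>{i\<in>I. vv i = e} - {?i0}. coef i) = 0" using rest by simp
    finally show ?thesis using c0 by simp
  qed
  show ?thesis
    by (rule exI[of _ I], rule exI[of _ coef], rule exI[of _ vv]) (use fI A B C in auto)
qed


theorem lemma4p9:
  fixes r :: nat and g :: "nat \<Rightarrow> tser" and g0 \<phi> :: tser and W :: "expo set"
  assumes "well_ordered W" and "W \<subseteq> expos r"
    and "\<forall>w\<in>W. (0, replicate r 0) < w"
    and "\<forall>n. g n \<in> Lr r \<and> supp (g n) \<subseteq> W"
    and "g0 \<in> Lr r"
    and "\<phi> \<in> Lr0 r"
  shows "weak_conv g g0 \<longleftrightarrow> weak_conv (\<lambda>n. tcomp r (g n) \<phi>) (tcomp r g0 \<phi>)"
proof -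
  note wW = assms(1) and WE = assms(2) and gW = assms(4) and g0L = assms(5) and phi = assms(6)
  define U where "U = W \<union> supp g0"
  have wU: "well_ordered U" unfolding U_def
    using wo_union[OF wW] g0L by (simp add: Lr_def)
  have UE: "U \<subseteq> EE r" unfolding U_def using WE g0L expos_EE by (auto simp: Lr_def)
  have sg: "supp (g n) \<subseteq> U" for n using gW unfolding U_def by blast
  have sg0: "supp g0 \<subseteq> U" unfolding U_def by blast
  have gz: "g n v = 0" if "v \<notin> U" for n v using sg[of n] that by (auto simp: supp_def)
  have g0z: "g0 v = 0" if "v \<notin> U" for v using sg0 that by (auto simp: supp_def)
  show ?thesis
  proof
    assume wc: "weak_conv g g0"
    show "weak_conv (\<lambda>n. tcomp r (g n) \<phi>) (tcomp r g0 \<phi>)"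
      unfolding weak_conv_def
    proof
      fix e
      obtain I :: "(nat \<times> (expo \<times> expo) \<times> expo) set" and coef vv where
        R: "finite I" "\<forall>g. supp g \<subseteq> U \<longrightarrow> tcomp r g \<phi> e = (\<Sum>i\<in>I. g (vv i) * coef i)"
        using repr[OF phi wU UE, of e] by blast
      have eqn: "(\<lambda>n. tcomp r (g n) \<phi> e) = (\<lambda>n. \<Sum>i\<in>I. g n (vv i) * coef i)"
        using R(2) sg by auto
      have eq0: "tcomp r g0 \<phi> e = (\<Sum>i\<in>I. g0 (vv i) * coef i)" using R(2) sg0 by auto
      have "(\<lambda>n. \<Sum>i\<in>I. g n (vv i) * coef i) \<longlonglongrightarrow> (\<Sum>i\<in>I. g0 (vv i) * coef i)"
      proof (rule tendsto_sum)
        fix i assume "i \<in> I"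
        have "(\<lambda>n. g n (vv i)) \<longlonglongrightarrow> g0 (vv i)" using wc unfolding weak_conv_def by blast
        then show "(\<lambda>n. g n (vv i) * coef i) \<longlonglongrightarrow> g0 (vv i) * coef i" by (rule tendsto_mult_right)
      qed
      then show "(\<lambda>n. tcomp r (g n) \<phi> e) \<longlonglongrightarrow> tcomp r g0 \<phi> e" using eqn eq0 by simp
    qed
  next
    assume wc: "weak_conv (\<lambda>n. tcomp r (g n) \<phi>) (tcomp r g0 \<phi>)"
    show "weak_conv g g0"
      unfolding weak_conv_def
    proof (rule ccontr)
      assume "\<not> (\<forall>e. (\<lambda>n. g n e) \<longlonglongrightarrow> g0 e)"
      define A where "A = {e. \<not> (\<lambda>n. g n e) \<longlonglongrightarrow> g0 e}"
      have Ane: "A \<noteq> {}" using \<open>\<not> (\<forall>e. _)\<close> unfolding A_def by blast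
      have AU: "A \<subseteq> U"
      proof
        fix e assume "e \<in> A"
        show "e \<in> U"
        proof (rule ccontr)
          assume "e \<notin> U"
          then have "(\<lambda>n. g n e) = (\<lambda>n. 0)" "g0 e = 0" using gz g0z by auto
          then have "(\<lambda>n. g n e) \<longlonglongrightarrow> g0 e" by simp
          then show False using \<open>e \<in> A\<close> unfolding A_def by blast
        qed
      qed
      obtain m where m: "m \<in> A" "\<forall>x\<in>A. m \<le> x"
        using wU AU Ane unfolding well_ordered_def by blast
      have mU: "m \<in> U" using m(1) AU by blast
      have below: "(\<lambda>n. g n v) \<longlonglongrightarrow> g0 v" if "v < m" for v
      proof (rule ccontr)
        assume "\<not> (\<lambda>n. g n v) \<longlonglongrightarrow> g0 v"
        then have "v \<in> A" unfolding A_def by blast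
        then show False using m(2) that by fastforce
      qed
      obtain I :: "(nat \<times> (expo \<times> expo) \<times> expo) set" and coef vv where
        R: "finite I" "\<forall>g. supp g \<subseteq> U \<longrightarrow> tcomp r g \<phi> m = (\<Sum>i\<in>I. g (vv i) * coef i)"
           "\<forall>i\<in>I. coef i \<noteq> 0 \<longrightarrow> vv i \<in> U \<longrightarrow> vv i = m \<or> vv i < m"
           "m \<in> U \<longrightarrow> (\<Sum>i\<in>{i\<in>I. vv i = m}. coef i) = 1"
        using repr[OF phi wU UE, of m] by blast
      define I1 where "I1 = {i\<in>I. vv i = m}"
      define I2 where "I2 = {i\<in>I. vv i \<noteq> m}"
      have fI1: "finite I1" and fI2: "finite I2" using R(1) unfolding I1_def I2_def by auto
      have split: "(\<Sum>i\<in>I. h (vv i) * coef i) = h m + (\<Sum>i\<in>I2. h (vv i) * coef i)" for h :: tser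
      proof -
        have "I = I1 \<union> I2" "I1 \<inter> I2 = {}" unfolding I1_def I2_def by auto
        then have "(\<Sum>i\<in>I. h (vv i) * coef i) = (\<Sum>i\<in>I1. h (vv i) * coef i) + (\<Sum>i\<in>I2. h (vv i) * coef i)"
          using sum.union_disjoint[OF fI1 fI2] by simp
        moreover have "(\<Sum>i\<in>I1. h (vv i) * coef i) = (\<Sum>i\<in>I1. h m * coef i)"
          unfolding I1_def by (intro sum.cong) auto
        moreover have "(\<Sum>i\<in>I1. h m * coef i) = h m"
          using R(4) mU unfolding I1_def by (simp add: sum_distrib_left[symmetric])
        ultimately show ?thesis by simp
      qed
      have conv2: "(\<lambda>n. \<Sum>i\<in>I2. g n (vv i) * coef i) \<longlonglongrightarrow> (\<Sum>i\<in>I2. g0 (vv i) * coef i)"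
      proof (rule tendsto_sum)
        fix i assume i: "i \<in> I2"
        show "(\<lambda>n. g n (vv i) * coef i) \<longlonglongrightarrow> g0 (vv i) * coef i"
        proof (cases "coef i = 0")
          case True then show ?thesis by simp
        next
          case False
          show ?thesis
          proof (cases "vv i \<in> U")
            case True
            then have "vv i < m" using R(3) False i unfolding I2_def by auto
            then show ?thesis using below by (intro tendsto_mult_right) auto
          next
            case nU: False
            then show ?thesis using gz g0z by simp
          qed
        qed
      qed
      have eqn: "g n m = tcomp r (g n) \<phi> m - (\<Sum>i\<in>I2. g n (vv i) * coef i)" for n
        using R(2) sg[of n] split[of "g n"] by simp
      have eq0: "g0 m = tcomp r g0 \<phi> m - (\<Sum>i\<in>I2. g0 (vv i) * coef i)"
        using R(2) sg0 split[of g0] by simp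
      have "(\<lambda>n. tcomp r (g n) \<phi> m) \<longlonglongrightarrow> tcomp r g0 \<phi> m" using wc unfolding weak_conv_def by blast
      then have "(\<lambda>n. tcomp r (g n) \<phi> m - (\<Sum>i\<in>I2. g n (vv i) * coef i)) \<longlonglongrightarrow>
          tcomp r g0 \<phi> m - (\<Sum>i\<in>I2. g0 (vv i) * coef i)"
        using conv2 by (rule tendsto_diff)
      then have "(\<lambda>n. g n m) \<longlonglongrightarrow> g0 m" using eqn eq0 by simp
      then show False using m(1) unfolding A_def by blast
    qed
  qed
qed


end
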